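(* Let an FTTC mechanism satisfy bounded advantage. Then for every FEE problem, the output assignment $p$ satisfies bounded envy: for all $i,j\in I$, $$\max_{o\in O}\Big[\sum_{o'\succsim_i o}p_{j,o'}-\sum_{o'\succsim_i o}p_{i,o'}\Big]\le\sum_{o\in O:\,\omega_{j,o}>\omega_{i,o}}(\omega_{j,o}-\omega_{i,o}).$$
   Context: Fractional endowment exchange (FEE) problem: a tuple $(I,O,\succsim_I,\omega)$ where $I$ is a finite set of agents, $O$ a finite set of objects, each agent $i$ has a complete and transitive (possibly non-strict) preference relation $\succsim_i$ over $O$ with asymmetric part $\succ_i$ and symmetric part $\sim_i$, and $\omega=(\omega_{i,o})_{i\in I,o\in O}$ is an endowment matrix with $\omega_{i,o}\in[0,1]$, $\sum_{o\in O}\omega_{i,o}\le 1$ for each $i$, and $q_o=\sum_{i\in I}\omega_{i,o}$ an integer for each $o$. An assignment is a nonnegative matrix $p=(p_{i,o})$ with $\sum_i p_{i,o}\le q_o$ for all $o$ and $\sum_o p_{i,o}\le 1$ for all $i$; $p_i=(p_{i,o})_{o\in O}$ is $i$'s lottery. FTTC (Fractional Top Trading Cycle) on the full preference domain. Initialize $\omega(0)=\omega$, $p(0)=0$, $O(0)=O$. At step $d\ge1$ (with $O(d-1)\ne\emptyset$): (i) Labeling. Put $T_0=O(d-1)$. For $k=1,2,\dots$: let $L_k$ be the set of agents $i\notin L_1\cup\dots\cup L_{k-1}$ for which there exist $o\in T_{k-1}$ and $o'\in O\setminus(T_0\cup\dots\cup T_{k-1})$ with $p_{i,o'}(d-1)>0$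 and $o\sim_i o'$; for $i\in L_k$ let $\tilde O_i(d-1)$ be the set of all such $o'$ for this $i$, and let $T_k=\bigcup_{i\in L_k}\tilde O_i(d-1)$. Stop at the first $k$ with $L_k=\emptyset$. Set $L(d-1)=\bigcup_k L_k$, $\tilde O(d-1)=\bigcup_{k\ge1}T_k$, $\overline{O}(d-1)=O(d-1)\cup\tilde O(d-1)$, and $\tilde O_i(d-1)=\emptyset$ for $i\notin L(d-1)$. (ii) Pointing. The active agents are $I(d-1)=L(d-1)\cup\{i\in I:\sum_o\omega_{i,o}(d-1)>0\}$. For $i\in I(d-1)$ let $B_i$ be the set of $\succsim_i$-maximal elements of $\overline{O}(d-1)$, let $k_i$ be the least $k\ge0$ with $B_i\cap T_k\ne\emptyset$, and let $A_i(d)=B_i\cap T_{k_i}$. (iii) Trading. The mechanism chooses (possibly depending on the history): a ratio matrix $\lambda(d)=(\lambda_{i,o}(d))_{i\in I(d-1),o\in\overline{O}(d-1)}$, nonnegative, with $\sum_{i\in I(d-1)}\lambda_{i,o}(d)=1$ for each $o\in\overline O(d-1)$, $\lambda_{i,o}(d)>0$ only if $\omega_{i,o}(d-1)>0$ (for $o\in O(d-1)$) and only if $o\in\tilde O_i(d-1)$ (for $o\in\tilde O(d-1)$); a quota matrix $\beta(d)$ on $I(d-1)\times O(d-1)$ with $0\le\beta_{i,o}(d)\le\omega_{i,o}(d-1)$; a division matrix $\gamma(d)$ on $I(d-1)\times\overline O(d-1)$, nonnegative, with $\sum_o\gamma_{i,o}(d)=1$ and $\gamma_{i,o}(d)>0$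 only if $o\in A_i(d)$. Let $x^*(d)=(x^*_a(d))_{a\in I(d-1)\cup\overline O(d-1)}$ be the maximum (componentwise largest) nonnegative solution of $x_o=\sum_{i\in I(d-1)}\gamma_{i,o}(d)x_i$ for all $o\in\overline O(d-1)$ and $x_i=\sum_{o\in\overline O(d-1)}\lambda_{i,o}(d)x_o$ for all $i\in I(d-1)$, subject to $\lambda_{i,o}(d)x_o\le\beta_{i,o}(d)$ for $o\in O(d-1)$ and $\lambda_{i,o}(d)x_o\le p_{i,o}(d-1)$ for $o\in\tilde O(d-1)$. For $i\in I(d-1)$: $\omega_{i,o}(d)=\omega_{i,o}(d-1)-\lambda_{i,o}(d)x^*_o(d)$ if $o\in O(d-1)$ and $0$ otherwise; $p_{i,o}(d)=p_{i,o}(d-1)-\mathbf 1[o\in\tilde O_i(d-1)]\lambda_{i,o}(d)x^*_o(d)+\gamma_{i,o}(d)x^*_i(d)$ (with $\gamma_{i,o}(d)=0$ for $o\notin\overline O(d-1)$). For $i\notin I(d-1)$, $\omega_i(d)=\omega_i(d-1)$, $p_i(d)=p_i(d-1)$. Let $O(d)=\{o\in O(d-1):\sum_i\omega_{i,o}(d)>0\}$. If $O(d)=\emptyset$ stop and output $p(d)$; otherwise go to step $d+1$. (Standing assumption: the maximum solution exists at each step and the procedure ends after finitely many steps.) An FTTC mechanism is specified by a rule choosing $\lambda(d),\beta(d),\gamma(d)$ at every step. Bounded advantage: at every step $d$, for all $i,j\in I(d-1)$ and all $o\in O(d-1)$, if $\omega_{i,o}(d-1)\ge\omega_{j,o}(d-1)$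 then $\lambda_{i,o}(d)\ge\lambda_{j,o}(d)$ and $\omega_{i,o}(d)\ge\omega_{j,o}(d)$. *)

theory Defs
  imports Complex_Main
begin

(* Preferences: R i a b  means  a \<succeq>_i b  (agent i weakly prefers a to b). *)

definition indiff :: "('i \<Rightarrow> 'o \<Rightarrow> 'o \<Rightarrow> bool) \<Rightarrow> 'i \<Rightarrow> 'o \<Rightarrow> 'o \<Rightarrow> bool" where
  "indiff R i a b \<longleftrightarrow> R i a b \<and> R i b a"

definition pref_domain :: "'i set \<Rightarrow> 'o set \<Rightarrow> ('i \<Rightarrow> 'o \<Rightarrow> 'o \<Rightarrow> bool) \<Rightarrow> bool" where
  "pref_domain I Obj R \<longleftrightarrow>
     (\<forall>i\<in>I. (\<forall>a\<in>Obj. \<forall>b\<in>Obj. R i a b \<or> R i b a) \<and>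
             (\<forall>a\<in>Obj. \<forall>b\<in>Obj. \<forall>c\<in>Obj. R i a b \<longrightarrow> R i b c \<longrightarrow> R i a c))"

definition FEE_problem :: "'i set \<Rightarrow> 'o set \<Rightarrow> ('i \<Rightarrow> 'o \<Rightarrow> 'o \<Rightarrow> bool) \<Rightarrow> ('i \<Rightarrow> 'o \<Rightarrow> real) \<Rightarrow> bool" where
  "FEE_problem I Obj R \<omega> \<longleftrightarrow>
     finite I \<and> finite Obj \<and> pref_domain I Obj R \<and>
     (\<forall>i\<in>I. \<forall>ob\<in>Obj. 0 \<le> \<omega> i ob \<and> \<omega> i ob \<le> 1) \<and>
     (\<forall>i\<in>I. (\<Sum>ob\<in>Obj. \<omega> i ob) \<le> 1) \<and>
     (\<forall>ob\<in>Obj. (\<Sum>i\<in>I. \<omega> i ob) \<in> \<int>)"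

(* Labeling step (i): lab ... k = (T_k, L_k, T_0 \<union> ... \<union> T_k, L_1 \<union> ... \<union> L_k),
   with current object set Oc = Obj(d-1) and current assignment pc = p(d-1). *)
definition lab_Oi :: "'o set \<Rightarrow> ('i \<Rightarrow> 'o \<Rightarrow> 'o \<Rightarrow> bool) \<Rightarrow> ('i \<Rightarrow> 'o \<Rightarrow> real)
    \<Rightarrow> 'o set \<Rightarrow> 'o set \<Rightarrow> 'i \<Rightarrow> 'o set" where
  "lab_Oi Obj R pc T TA i = {ob'\<in>Obj - TA. pc i ob' > 0 \<and> (\<exists>ob\<in>T. indiff R i ob ob')}"

primrec lab :: "'i set \<Rightarrow> 'o set \<Rightarrow> ('i \<Rightarrow> 'o \<Rightarrow> 'o \<Rightarrow> bool) \<Rightarrow> 'o set \<Rightarrow> ('i \<Rightarrow> 'o \<Rightarrow> real)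
    \<Rightarrow> nat \<Rightarrow> 'o set \<times> 'i set \<times> 'o set \<times> 'i set" where
  "lab I Obj R Oc pc 0 = (Oc, {}, Oc, {})"
| "lab I Obj R Oc pc (Suc k) =
     (case lab I Obj R Oc pc k of (T, L, TA, LA) \<Rightarrow>
       let L' = {i\<in>I. i \<notin> LA \<and> lab_Oi Obj R pc T TA i \<noteq> {}};
           T' = (\<Union>i\<in>L'. lab_Oi Obj R pc T TA i)
       in (T', L', TA \<union> T', LA \<union> L'))"

definition labT where "labT I Obj R Oc pc k = fst (lab I Obj R Oc pc k)"
definition labL where "labL I Obj R Oc pc k = fst (snd (lab I Obj R Oc pc k))"

definition Ltil where "Ltil I Obj R Oc pc = (\<Union>k. labL I Obj R Oc pc (Suc k))"
definition Otil where "Otil I Obj R Oc pc = (\<Union>k. labT I Obj R Oc pc (Suc k))"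
definition Obar where "Obar I Obj R Oc pc = Oc \<union> Otil I Obj R Oc pc"
definition Otil_i where
  "Otil_i I Obj R Oc pc i =
     (\<Union>k. if i \<in> labL I Obj R Oc pc (Suc k)
          then (case lab I Obj R Oc pc k of (T, L, TA, LA) \<Rightarrow> lab_Oi Obj R pc T TA i)
          else {})"

definition Iact where
  "Iact I Obj R Oc om pc = Ltil I Obj R Oc pc \<union> {i\<in>I. (\<Sum>ob\<in>Obj. om i ob) > 0}"

definition Bset where
  "Bset I Obj R Oc pc i = {ob\<in>Obar I Obj R Oc pc. \<forall>ob'\<in>Obar I Obj R Oc pc. R i ob ob'}"
definition Aset where
  "Aset I Obj R Oc pc i =
     Bset I Obj R Oc pc i \<inter> labT I Obj R Oc pc (LEAST k. Bset I Obj R Oc pc i \<inter> labT I Obj R Oc pc k \<noteq> {})"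

definition feasible ::
  "'i set \<Rightarrow> 'o set \<Rightarrow> 'o set \<Rightarrow> 'o set \<Rightarrow> ('i \<Rightarrow> 'o \<Rightarrow> real) \<Rightarrow> ('i \<Rightarrow> 'o \<Rightarrow> real)
   \<Rightarrow> ('i \<Rightarrow> 'o \<Rightarrow> real) \<Rightarrow> ('i \<Rightarrow> 'o \<Rightarrow> real) \<Rightarrow> ('i \<Rightarrow> real) \<Rightarrow> ('o \<Rightarrow> real) \<Rightarrow> bool" where
  "feasible Ia Oc Ot Ob lam beta gam pc xi xo \<longleftrightarrow>
     (\<forall>i\<in>Ia. 0 \<le> xi i) \<and> (\<forall>ob\<in>Ob. 0 \<le> xo ob) \<and>
     (\<forall>ob\<in>Ob. xo ob = (\<Sum>i\<in>Ia. gam i ob * xi i)) \<and>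
     (\<forall>i\<in>Ia. xi i = (\<Sum>ob\<in>Ob. lam i ob * xo ob)) \<and>
     (\<forall>i\<in>Ia. \<forall>ob\<in>Oc. lam i ob * xo ob \<le> beta i ob) \<and>
     (\<forall>i\<in>Ia. \<forall>ob\<in>Ot. lam i ob * xo ob \<le> pc i ob)"

definition max_solution where
  "max_solution Ia Oc Ot Ob lam beta gam pc xi xo \<longleftrightarrow>
     feasible Ia Oc Ot Ob lam beta gam pc xi xo \<and>
     (\<forall>yi yo. feasible Ia Oc Ot Ob lam beta gam pc yi yo \<longrightarrow>
        (\<forall>i\<in>Ia. yi i \<le> xi i) \<and> (\<forall>ob\<in>Ob. yo ob \<le> xo ob))"

(* One FTTC step d, from state (om, pc) = (omega(d-1), p(d-1)) with Oc = Obj(d-1),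
   using the mechanism's choices lam, beta, gam and the maximum solution (xi, xo),
   to state (om', pc') = (omega(d), p(d)). *)
definition fttc_step ::
  "'i set \<Rightarrow> 'o set \<Rightarrow> ('i \<Rightarrow> 'o \<Rightarrow> 'o \<Rightarrow> bool) \<Rightarrow> 'o set
   \<Rightarrow> ('i \<Rightarrow> 'o \<Rightarrow> real) \<Rightarrow> ('i \<Rightarrow> 'o \<Rightarrow> real)
   \<Rightarrow> ('i \<Rightarrow> 'o \<Rightarrow> real) \<Rightarrow> ('i \<Rightarrow> 'o \<Rightarrow> real) \<Rightarrow> ('i \<Rightarrow> 'o \<Rightarrow> real)
   \<Rightarrow> ('i \<Rightarrow> real) \<Rightarrow> ('o \<Rightarrow> real)
   \<Rightarrow> ('i \<Rightarrow> 'o \<Rightarrow> real) \<Rightarrow> ('i \<Rightarrow> 'o \<Rightarrow> real) \<Rightarrow> bool" where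
  "fttc_step I Obj R Oc om pc lam beta gam xi xo om' pc' \<longleftrightarrow>
     (let Ia = Iact I Obj R Oc om pc; Ot = Otil I Obj R Oc pc; Ob = Obar I Obj R Oc pc in
       (\<forall>i\<in>Ia. \<forall>ob\<in>Ob. 0 \<le> lam i ob) \<and>
       (\<forall>ob\<in>Ob. (\<Sum>i\<in>Ia. lam i ob) = 1) \<and>
       (\<forall>i\<in>Ia. \<forall>ob\<in>Oc. lam i ob > 0 \<longrightarrow> om i ob > 0) \<and>
       (\<forall>i\<in>Ia. \<forall>ob\<in>Ot. lam i ob > 0 \<longrightarrow> ob \<in> Otil_i I Obj R Oc pc i) \<and>
       (\<forall>i\<in>Ia. \<forall>ob\<in>Oc. 0 \<le> beta i ob \<and> beta i ob \<le> om i ob) \<and>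
       (\<forall>i\<in>Ia. (\<forall>ob\<in>Ob. 0 \<le> gam i ob) \<and> (\<Sum>ob\<in>Ob. gam i ob) = 1 \<and>
                (\<forall>ob\<in>Ob. gam i ob > 0 \<longrightarrow> ob \<in> Aset I Obj R Oc pc i)) \<and>
       max_solution Ia Oc Ot Ob lam beta gam pc xi xo \<and>
       (\<forall>i\<in>Ia. \<forall>ob\<in>Obj.
          om' i ob = (if ob \<in> Oc then om i ob - lam i ob * xo ob else 0) \<and>
          pc' i ob = pc i ob
                    - (if ob \<in> Otil_i I Obj R Oc pc i then lam i ob * xo ob else 0)
                    + (if ob \<in> Ob then gam i ob * xi i else 0)) \<and>
       (\<forall>i\<in>I - Ia. \<forall>ob\<in>Obj. om' i ob = om i ob \<and> pc' i ob = pc i ob))"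

primrec curO :: "'i set \<Rightarrow> 'o set \<Rightarrow> (nat \<Rightarrow> 'i \<Rightarrow> 'o \<Rightarrow> real) \<Rightarrow> nat \<Rightarrow> 'o set" where
  "curO I Obj om 0 = Obj"
| "curO I Obj om (Suc d) = {ob\<in>curO I Obj om d. (\<Sum>i\<in>I. om (Suc d) i ob) > 0}"

(* A complete terminating FTTC run with D steps: om d = omega(d), pp d = p(d);
   lam d, beta d, gam d, xi d, xo d are the choices / maximum solution at step d (d \<ge> 1).
   The output assignment is pp D. *)
definition fttc_run ::
  "'i set \<Rightarrow> 'o set \<Rightarrow> ('i \<Rightarrow> 'o \<Rightarrow> 'o \<Rightarrow> bool) \<Rightarrow> ('i \<Rightarrow> 'o \<Rightarrow> real)
   \<Rightarrow> (nat \<Rightarrow> 'i \<Rightarrow> 'o \<Rightarrow> real) \<Rightarrow> (nat \<Rightarrow> 'i \<Rightarrow> 'o \<Rightarrow> real)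
   \<Rightarrow> (nat \<Rightarrow> 'i \<Rightarrow> 'o \<Rightarrow> real) \<Rightarrow> (nat \<Rightarrow> 'i \<Rightarrow> 'o \<Rightarrow> real) \<Rightarrow> (nat \<Rightarrow> 'i \<Rightarrow> 'o \<Rightarrow> real)
   \<Rightarrow> (nat \<Rightarrow> 'i \<Rightarrow> real) \<Rightarrow> (nat \<Rightarrow> 'o \<Rightarrow> real) \<Rightarrow> nat \<Rightarrow> bool" where
  "fttc_run I Obj R \<omega> om pp lam beta gam xi xo D \<longleftrightarrow>
     (\<forall>i\<in>I. \<forall>ob\<in>Obj. om 0 i ob = \<omega> i ob \<and> pp 0 i ob = 0) \<and>
     curO I Obj om D = {} \<and>
     (\<forall>d<D. curO I Obj om d \<noteq> {} \<and>
        fttc_step I Obj R (curO I Obj om d) (om d) (pp d)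
          (lam (Suc d)) (beta (Suc d)) (gam (Suc d)) (xi (Suc d)) (xo (Suc d))
          (om (Suc d)) (pp (Suc d)))"

definition bounded_advantage ::
  "'i set \<Rightarrow> 'o set \<Rightarrow> ('i \<Rightarrow> 'o \<Rightarrow> 'o \<Rightarrow> bool)
   \<Rightarrow> (nat \<Rightarrow> 'i \<Rightarrow> 'o \<Rightarrow> real) \<Rightarrow> (nat \<Rightarrow> 'i \<Rightarrow> 'o \<Rightarrow> real) \<Rightarrow> (nat \<Rightarrow> 'i \<Rightarrow> 'o \<Rightarrow> real)
   \<Rightarrow> nat \<Rightarrow> bool" where
  "bounded_advantage I Obj R om pp lam D \<longleftrightarrow>
     (\<forall>d<D. let Oc = curO I Obj om d; Ia = Iact I Obj R Oc (om d) (pp d) in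
        \<forall>i\<in>Ia. \<forall>j\<in>Ia. \<forall>ob\<in>Oc. om d i ob \<ge> om d j ob \<longrightarrow>
           lam (Suc d) i ob \<ge> lam (Suc d) j ob \<and> om (Suc d) i ob \<ge> om (Suc d) j ob)"

end

theory Submission
  imports Defs
begin



definition labTA where "labTA I Obj R Oc pc k = fst (snd (snd (lab I Obj R Oc pc k)))"
definition labLA where "labLA I Obj R Oc pc k = snd (snd (snd (lab I Obj R Oc pc k)))"

lemma lab_eq: "lab I Obj R Oc pc k = (labT I Obj R Oc pc k, labL I Obj R Oc pc k, labTA I Obj R Oc pc k, labLA I Obj R Oc pc k)"
  by (simp add: labT_def labL_def labTA_def labLA_def)

lemma labL_Suc: "labL I Obj R Oc pc (Suc k) =
   {i\<in>I. i \<notin> labLA I Obj R Oc pc k \<and> lab_Oi Obj R pc (labT I Obj R Oc pc k) (labTA I Obj R Oc pc k) i \<noteq> {}}"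
  by (subst labL_def, simp add: lab_eq[of I Obj R Oc pc k] Let_def)

lemma labT_Suc: "labT I Obj R Oc pc (Suc k) =
   (\<Union>i\<in>labL I Obj R Oc pc (Suc k). lab_Oi Obj R pc (labT I Obj R Oc pc k) (labTA I Obj R Oc pc k) i)"
  by (subst labT_def, simp add: labL_Suc lab_eq[of I Obj R Oc pc k] Let_def)

lemma labTA_Suc: "labTA I Obj R Oc pc (Suc k) = labTA I Obj R Oc pc k \<union> labT I Obj R Oc pc (Suc k)"
  by (subst labTA_def, simp add: labT_Suc labL_Suc lab_eq[of I Obj R Oc pc k] Let_def)

lemma labLA_Suc: "labLA I Obj R Oc pc (Suc k) = labLA I Obj R Oc pc k \<union> labL I Obj R Oc pc (Suc k)"
  by (subst labLA_def, simp add: labL_Suc lab_eq[of I Obj R Oc pc k] Let_def)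

lemma lab_0: "labT I Obj R Oc pc 0 = Oc" "labL I Obj R Oc pc 0 = {}" "labTA I Obj R Oc pc 0 = Oc" "labLA I Obj R Oc pc 0 = {}"
  by (simp_all add: labT_def labL_def labTA_def labLA_def)

lemma labTA_eq: "labTA I Obj R Oc pc k = (\<Union>m\<le>k. labT I Obj R Oc pc m)"
  by (induction k) (auto simp: lab_0 labTA_Suc le_Suc_eq)

lemma labLA_eq: "labLA I Obj R Oc pc k = (\<Union>m<k. labL I Obj R Oc pc (Suc m))"
  by (induction k) (auto simp: lab_0 labLA_Suc less_Suc_eq)

lemma Otil_i_eq: "Otil_i I Obj R Oc pc i = (\<Union>k\<in>{k. i \<in> labL I Obj R Oc pc (Suc k)}. lab_Oi Obj R pc (labT I Obj R Oc pc k) (labTA I Obj R Oc pc k) i)"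
  unfolding Otil_i_def by (auto simp: lab_eq split: if_splits)

lemma Otil_i_sub: "Otil_i I Obj R Oc pc i \<subseteq> Otil I Obj R Oc pc"
  unfolding Otil_i_eq Otil_def by (auto simp: labT_Suc)

lemma lab_Oi_sub: "lab_Oi Obj R pc T TA i \<subseteq> Obj - TA"
  unfolding lab_Oi_def by auto

lemma labT_Suc_sub: "labT I Obj R Oc pc (Suc k) \<subseteq> Obj - labTA I Obj R Oc pc k"
  by (auto simp: labT_Suc lab_Oi_def)

lemma Otil_sub: "Otil I Obj R Oc pc \<subseteq> Obj"
proof
  fix x assume "x \<in> Otil I Obj R Oc pc"
  then obtain k where "x \<in> labT I Obj R Oc pc (Suc k)" unfolding Otil_def by auto
  thus "x \<in> Obj" by (meson DiffD1 labT_Suc_sub subsetD)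
qed

lemma Oc_Otil_disj: "Oc \<inter> Otil I Obj R Oc pc = {}"
proof -
  have "Oc \<subseteq> labTA I Obj R Oc pc k" for k by (auto simp: labTA_eq lab_0 intro!: exI[of _ 0])
  show ?thesis
  proof (rule ccontr)
    assume "Oc \<inter> Otil I Obj R Oc pc \<noteq> {}"
    then obtain x k where "x \<in> Oc" "x \<in> labT I Obj R Oc pc (Suc k)" unfolding Otil_def by auto
    thus False using labT_Suc_sub[of I Obj R Oc pc k] \<open>\<And>k. Oc \<subseteq> labTA I Obj R Oc pc k\<close> by (meson DiffD2 subsetD)
  qed
qed

lemma labT_sub_Obar: "labT I Obj R Oc pc m \<subseteq> Obar I Obj R Oc pc"
proof (cases m)
  case 0 thus ?thesis by (simp add: lab_0 Obar_def)
next
  case (Suc m') thus ?thesis unfolding Obar_def Otil_def by auto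
qed

lemma labTA_sub_Obar: "labTA I Obj R Oc pc k \<subseteq> Obar I Obj R Oc pc"
  unfolding labTA_eq by (rule UN_least) (rule labT_sub_Obar)

lemma Obar_sub: "Oc \<subseteq> Obj \<Longrightarrow> Obar I Obj R Oc pc \<subseteq> Obj"
  using Otil_sub unfolding Obar_def by (simp add: Un_least)

lemma labL_sub: "labL I Obj R Oc pc k \<subseteq> I"
  by (cases k) (auto simp: labL_Suc lab_0)

lemma Iact_sub: "Iact I Obj R Oc om pc \<subseteq> I"
proof
  fix x assume "x \<in> Iact I Obj R Oc om pc"
  then consider "x \<in> I" | k where "x \<in> labL I Obj R Oc pc (Suc k)" unfolding Iact_def Ltil_def by blast
  thus "x \<in> I" by cases (metis labL_sub subsetD)+
qed

lemma Obar_min: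
  assumes "Oc \<subseteq> X"
    and cl: "\<And>k w z. k \<in> I \<Longrightarrow> w \<in> Obj \<Longrightarrow> pc k w > 0 \<Longrightarrow> z \<in> X \<Longrightarrow> indiff R k z w \<Longrightarrow> w \<in> X"
  shows "Obar I Obj R Oc pc \<subseteq> X"
proof -
  have "labTA I Obj R Oc pc k \<subseteq> X" for k
  proof (induction k)
    case 0 thus ?case using assms by (simp add: lab_0)
  next
    case (Suc k)
    have "labT I Obj R Oc pc (Suc k) \<subseteq> X"
    proof
      fix w assume "w \<in> labT I Obj R Oc pc (Suc k)"
      then obtain i where i: "i \<in> labL I Obj R Oc pc (Suc k)" and w: "w \<in> lab_Oi Obj R pc (labT I Obj R Oc pc k) (labTA I Obj R Oc pc k) i"
        by (auto simp: labT_Suc)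
      from w obtain z where "z \<in> labT I Obj R Oc pc k" "indiff R i z w" "pc i w > 0" "w \<in> Obj"
        unfolding lab_Oi_def by auto
      moreover have "z \<in> X" using Suc calculation(1) by (auto simp: labTA_eq)
      ultimately show "w \<in> X" using cl i labL_sub by (meson subsetD)
    qed
    thus ?case using Suc by (simp add: labTA_Suc)
  qed
  hence "labT I Obj R Oc pc (Suc k) \<subseteq> X" for k using labTA_Suc[of I Obj R Oc pc k] by (metis le_sup_iff)
  thus ?thesis unfolding Obar_def Otil_def using assms(1) by (simp add: UN_least)
qed




locale frun =
  fixes I :: "'i set" and Obj :: "'y set" and R :: "'i \<Rightarrow> 'y \<Rightarrow> 'y \<Rightarrow> bool"
    and \<omega> :: "'i \<Rightarrow> 'y \<Rightarrow> real"
    and om pp lam beta gam :: "nat \<Rightarrow> 'i \<Rightarrow> 'y \<Rightarrow> real"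
    and xi :: "nat \<Rightarrow> 'i \<Rightarrow> real" and xo :: "nat \<Rightarrow> 'y \<Rightarrow> real" and D :: nat
  assumes fee: "FEE_problem I Obj R \<omega>"
    and run: "fttc_run I Obj R \<omega> om pp lam beta gam xi xo D"
    and ba: "bounded_advantage I Obj R om pp lam D"
begin

abbreviation "Oc d \<equiv> curO I Obj om d"
abbreviation "Ob d \<equiv> Obar I Obj R (Oc d) (pp d)"
abbreviation "Ot d \<equiv> Otil I Obj R (Oc d) (pp d)"
abbreviation "Ia d \<equiv> Iact I Obj R (Oc d) (om d) (pp d)"
abbreviation "Oti d k \<equiv> Otil_i I Obj R (Oc d) (pp d) k"

lemma finI: "finite I" and finObj: "finite Obj"
  using fee by (auto simp: FEE_problem_def)

lemma prefd: "pref_domain I Obj R" using fee by (simp add: FEE_problem_def)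
lemma Rtot: "i \<in> I \<Longrightarrow> a \<in> Obj \<Longrightarrow> b \<in> Obj \<Longrightarrow> R i a b \<or> R i b a"
  using prefd unfolding pref_domain_def by (elim ballE conjE) auto
lemma Rtrans: "i \<in> I \<Longrightarrow> a \<in> Obj \<Longrightarrow> b \<in> Obj \<Longrightarrow> c \<in> Obj \<Longrightarrow> R i a b \<Longrightarrow> R i b c \<Longrightarrow> R i a c"
  using prefd unfolding pref_domain_def by (elim ballE conjE) auto

lemma om0: "k \<in> I \<Longrightarrow> y \<in> Obj \<Longrightarrow> om 0 k y = \<omega> k y"
  and pp0: "k \<in> I \<Longrightarrow> y \<in> Obj \<Longrightarrow> pp 0 k y = 0"
  using run by (auto simp: fttc_run_def)

lemma OcD: "Oc D = {}" using run by (simp add: fttc_run_def)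

lemma step: "d < D \<Longrightarrow> fttc_step I Obj R (Oc d) (om d) (pp d)
          (lam (Suc d)) (beta (Suc d)) (gam (Suc d)) (xi (Suc d)) (xo (Suc d))
          (om (Suc d)) (pp (Suc d))"
  using run by (simp add: fttc_run_def)

lemma Oc_sub: "Oc d \<subseteq> Obj" by (induction d) auto
lemma Oc_mono: "Oc (Suc d) \<subseteq> Oc d" by auto
lemma Ob_sub: "Ob d \<subseteq> Obj" using Obar_sub[OF Oc_sub] .
lemma Ia_sub: "Ia d \<subseteq> I" using Iact_sub .
lemma Oti_sub: "Oti d k \<subseteq> Ot d" using Otil_i_sub .
lemma Ot_sub_Ob: "Ot d \<subseteq> Ob d" unfolding Obar_def by auto
lemma Oc_sub_Ob: "Oc d \<subseteq> Ob d" unfolding Obar_def by auto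
lemma Ob_Un: "Ob d = Oc d \<union> Ot d" unfolding Obar_def ..
lemma finOb: "finite (Ob d)" using finite_subset[OF Ob_sub finObj] .
lemma finOc: "finite (Oc d)" using finite_subset[OF Oc_sub finObj] .
lemma finOt: "finite (Ot d)" using finite_subset[OF Otil_sub finObj] .
lemma finOti: "finite (Oti d k)" using finite_subset[OF Oti_sub finOt] .
lemma finIa: "finite (Ia d)" using finite_subset[OF Ia_sub finI] .

context
  fixes d assumes dD: "d < D"
begin

lemma c1: "\<forall>i\<in>Ia d. \<forall>y\<in>Ob d. 0 \<le> lam (Suc d) i y"
  using step[OF dD] unfolding fttc_step_def Let_def by (elim conjE) assumption
lemma c3: "\<forall>i\<in>Ia d. \<forall>y\<in>Ot d. lam (Suc d) i y > 0 \<longrightarrow> y \<in> Oti d i"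
  using step[OF dD] unfolding fttc_step_def Let_def by (elim conjE) assumption
lemma c4: "\<forall>i\<in>Ia d. \<forall>y\<in>Oc d. 0 \<le> beta (Suc d) i y \<and> beta (Suc d) i y \<le> om d i y"
  using step[OF dD] unfolding fttc_step_def Let_def by (elim conjE) assumption
lemma c5: "\<forall>i\<in>Ia d. (\<forall>y\<in>Ob d. 0 \<le> gam (Suc d) i y) \<and> (\<Sum>y\<in>Ob d. gam (Suc d) i y) = 1 \<and>
                (\<forall>y\<in>Ob d. gam (Suc d) i y > 0 \<longrightarrow> y \<in> Aset I Obj R (Oc d) (pp d) i)"
  using step[OF dD] unfolding fttc_step_def Let_def by (elim conjE) assumption
lemma c6: "\<forall>i\<in>Ia d. \<forall>y\<in>Obj.
          om (Suc d) i y = (if y \<in> Oc d then om d i y - lam (Suc d) i y * xo (Suc d) y else 0) \<and>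
          pp (Suc d) i y = pp d i y
                    - (if y \<in> Oti d i then lam (Suc d) i y * xo (Suc d) y else 0)
                    + (if y \<in> Ob d then gam (Suc d) i y * xi (Suc d) i else 0)"
  using step[OF dD] unfolding fttc_step_def Let_def by (elim conjE) assumption
lemma c7: "\<forall>i\<in>I - Ia d. \<forall>y\<in>Obj. om (Suc d) i y = om d i y \<and> pp (Suc d) i y = pp d i y"
  using step[OF dD] unfolding fttc_step_def Let_def by (elim conjE) assumption

lemma feas: "feasible (Ia d) (Oc d) (Ot d) (Ob d) (lam (Suc d)) (beta (Suc d)) (gam (Suc d)) (pp d) (xi (Suc d)) (xo (Suc d))"
  using step[OF dD] unfolding fttc_step_def Let_def max_solution_def by (elim conjE)
lemma f1: "\<forall>i\<in>Ia d. 0 \<le> xi (Suc d) i" using feas unfolding feasible_def by (elim conjE) assumption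
lemma f2: "\<forall>y\<in>Ob d. 0 \<le> xo (Suc d) y" using feas unfolding feasible_def by (elim conjE) assumption
lemma f4: "\<forall>i\<in>Ia d. xi (Suc d) i = (\<Sum>y\<in>Ob d. lam (Suc d) i y * xo (Suc d) y)"
  using feas unfolding feasible_def by (elim conjE) assumption
lemma f5: "\<forall>i\<in>Ia d. \<forall>y\<in>Oc d. lam (Suc d) i y * xo (Suc d) y \<le> beta (Suc d) i y"
  using feas unfolding feasible_def by (elim conjE) assumption

lemma f6: "\<forall>i\<in>Ia d. \<forall>y\<in>Ot d. lam (Suc d) i y * xo (Suc d) y \<le> pp d i y"
  using feas unfolding feasible_def by (elim conjE) assumption
lemma lamx_pp: "k \<in> Ia d \<Longrightarrow> y \<in> Ot d \<Longrightarrow> lam (Suc d) k y * xo (Suc d) y \<le> pp d k y"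
  using f6[rule_format] .

lemma lam_nn: "k \<in> Ia d \<Longrightarrow> y \<in> Ob d \<Longrightarrow> 0 \<le> lam (Suc d) k y"
  using c1 by (rule_tac bspec) (rule bspec)
lemma lam_Ot: "k \<in> Ia d \<Longrightarrow> y \<in> Ot d \<Longrightarrow> lam (Suc d) k y > 0 \<Longrightarrow> y \<in> Oti d k"
  using c3[rule_format] .
lemma beta_le: "k \<in> Ia d \<Longrightarrow> y \<in> Oc d \<Longrightarrow> beta (Suc d) k y \<le> om d k y"
  using c4[rule_format] by (rule conjunct2)
lemma gam_nn: "k \<in> Ia d \<Longrightarrow> y \<in> Ob d \<Longrightarrow> 0 \<le> gam (Suc d) k y"
  using c5 by meson
lemma gam_sum: "k \<in> Ia d \<Longrightarrow> (\<Sum>y\<in>Ob d. gam (Suc d) k y) = 1"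
  using c5 by meson
lemma gam_A: "k \<in> Ia d \<Longrightarrow> y \<in> Ob d \<Longrightarrow> gam (Suc d) k y > 0 \<Longrightarrow> y \<in> Aset I Obj R (Oc d) (pp d) k"
  using c5 by meson
lemma xi_nn: "k \<in> Ia d \<Longrightarrow> 0 \<le> xi (Suc d) k" using f1[rule_format] .
lemma xo_nn: "y \<in> Ob d \<Longrightarrow> 0 \<le> xo (Suc d) y" using f2[rule_format] .
lemma xi_eq: "k \<in> Ia d \<Longrightarrow> xi (Suc d) k = (\<Sum>y\<in>Ob d. lam (Suc d) k y * xo (Suc d) y)"
  using f4[rule_format] .
lemma lamx_beta: "k \<in> Ia d \<Longrightarrow> y \<in> Oc d \<Longrightarrow> lam (Suc d) k y * xo (Suc d) y \<le> beta (Suc d) k y"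
  using f5[rule_format] .
lemma om_upd: "k \<in> Ia d \<Longrightarrow> y \<in> Obj \<Longrightarrow>
   om (Suc d) k y = (if y \<in> Oc d then om d k y - lam (Suc d) k y * xo (Suc d) y else 0)"
  using c6[rule_format] by (rule conjunct1)
lemma pp_upd: "k \<in> Ia d \<Longrightarrow> y \<in> Obj \<Longrightarrow>
   pp (Suc d) k y = pp d k y - (if y \<in> Oti d k then lam (Suc d) k y * xo (Suc d) y else 0)
                    + (if y \<in> Ob d then gam (Suc d) k y * xi (Suc d) k else 0)"
  using c6[rule_format] by (rule conjunct2)
lemma inact: "k \<in> I \<Longrightarrow> k \<notin> Ia d \<Longrightarrow> y \<in> Obj \<Longrightarrow> om (Suc d) k y = om d k y \<and> pp (Suc d) k y = pp d k y"
  using c7[rule_format] by simp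

lemma lamx_nn: "k \<in> Ia d \<Longrightarrow> y \<in> Ob d \<Longrightarrow> 0 \<le> lam (Suc d) k y * xo (Suc d) y"
  using lam_nn xo_nn by simp

lemma lam_Ot0: "k \<in> Ia d \<Longrightarrow> y \<in> Ot d \<Longrightarrow> y \<notin> Oti d k \<Longrightarrow> lam (Suc d) k y = 0"
  using lam_Ot lam_nn[of k y] Ot_sub_Ob by force

lemma xi_split: "k \<in> Ia d \<Longrightarrow> xi (Suc d) k =
   (\<Sum>y\<in>Oc d. lam (Suc d) k y * xo (Suc d) y) + (\<Sum>y\<in>Oti d k. lam (Suc d) k y * xo (Suc d) y)"
proof -
  assume k: "k \<in> Ia d"
  have "xi (Suc d) k = (\<Sum>y\<in>Oc d. lam (Suc d) k y * xo (Suc d) y) + (\<Sum>y\<in>Ot d. lam (Suc d) k y * xo (Suc d) y)"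
    using xi_eq[OF k] Ob_Un[of d] Oc_Otil_disj sum.union_disjoint[OF finOc finOt] by metis
  moreover have "(\<Sum>y\<in>Ot d. lam (Suc d) k y * xo (Suc d) y) = (\<Sum>y\<in>Oti d k. lam (Suc d) k y * xo (Suc d) y)"
    by (rule sum.mono_neutral_right[OF finOt Oti_sub]) (use lam_Ot0[OF k] in auto)
  ultimately show ?thesis by simp
qed

end
end



context frun begin

lemma om_nn: "d \<le> D \<Longrightarrow> k \<in> I \<Longrightarrow> y \<in> Obj \<Longrightarrow> 0 \<le> om d k y"
proof (induction d arbitrary: k y)
  case 0 thus ?case using fee om0 by (simp add: FEE_problem_def)
next
  case (Suc d)
  hence dD: "d < D" by simp
  show ?case
  proof (cases "k \<in> Ia d")
    case True
    show ?thesis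
    proof (cases "y \<in> Oc d")
      case True
      have "lam (Suc d) k y * xo (Suc d) y \<le> om d k y"
        using lamx_beta[OF dD \<open>k \<in> Ia d\<close> True] beta_le[OF dD \<open>k \<in> Ia d\<close> True] by linarith
      thus ?thesis using om_upd[OF dD \<open>k \<in> Ia d\<close> Suc.prems(3)] True by simp
    next
      case False thus ?thesis using om_upd[OF dD \<open>k \<in> Ia d\<close> Suc.prems(3)] by simp
    qed
  next
    case False thus ?thesis using inact[OF dD Suc.prems(2) False Suc.prems(3)] Suc by simp
  qed
qed

lemma om_le: "d < D \<Longrightarrow> k \<in> I \<Longrightarrow> y \<in> Obj \<Longrightarrow> om (Suc d) k y \<le> om d k y"
proof -
  assume dD: "d < D" and k: "k \<in> I" and y: "y \<in> Obj"
  show ?thesis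
  proof (cases "k \<in> Ia d")
    case True
    show ?thesis
    proof (cases "y \<in> Oc d")
      case True
      have "0 \<le> lam (Suc d) k y * xo (Suc d) y"
        using lam_nn[OF dD \<open>k \<in> Ia d\<close>] xo_nn[OF dD] Oc_sub_Ob True by (meson mult_nonneg_nonneg subsetD)
      thus ?thesis using om_upd[OF dD \<open>k \<in> Ia d\<close> y] True by simp
    next
      case False thus ?thesis using om_upd[OF dD \<open>k \<in> Ia d\<close> y] om_nn[of d k y] dD k y by simp
    qed
  next
    case False thus ?thesis using inact[OF dD k False y] by simp
  qed
qed

lemma om_zero: "d \<le> D \<Longrightarrow> k \<in> I \<Longrightarrow> y \<in> Obj \<Longrightarrow> y \<notin> Oc d \<Longrightarrow> om d k y = 0"
proof (induction d arbitrary: k y)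
  case 0 thus ?case by simp
next
  case (Suc d)
  hence dD: "d < D" by simp
  show ?case
  proof (cases "y \<in> Oc d")
    case True
    hence "\<not> (\<Sum>i\<in>I. om (Suc d) i y) > 0" using Suc.prems(4) by simp
    moreover have "\<forall>i\<in>I. 0 \<le> om (Suc d) i y" using om_nn Suc.prems by simp
    ultimately have "\<forall>i\<in>I. om (Suc d) i y = 0"
      using sum_nonneg_eq_0_iff[OF finI, of "\<lambda>i. om (Suc d) i y"] sum_nonneg[of I "\<lambda>i. om (Suc d) i y"] by force
    thus ?thesis using Suc.prems(2) by simp
  next
    case False
    show ?thesis
    proof (cases "k \<in> Ia d")
      case True thus ?thesis using om_upd[OF dD True Suc.prems(3)] False by simp
    next
      case F2: False thus ?thesis using inact[OF dD Suc.prems(2) F2 Suc.prems(3)] Suc.IH[of k y] Suc.prems False by simp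
    qed
  qed
qed

lemma inact_zero: "d \<le> D \<Longrightarrow> k \<in> I \<Longrightarrow> k \<notin> Ia d \<Longrightarrow> y \<in> Obj \<Longrightarrow> om d k y = 0"
proof -
  assume d: "d \<le> D" and k: "k \<in> I" and na: "k \<notin> Ia d" and y: "y \<in> Obj"
  have "\<not> (\<Sum>y\<in>Obj. om d k y) > 0" using na k unfolding Iact_def by auto
  moreover have "\<forall>y\<in>Obj. 0 \<le> om d k y" using om_nn d k by simp
  ultimately have "\<forall>y\<in>Obj. om d k y = 0"
    using sum_nonneg_eq_0_iff[OF finObj, of "\<lambda>y. om d k y"] sum_nonneg[of Obj "\<lambda>y. om d k y"] by force
  thus ?thesis using y by simp
qed

lemma pp_nn: "d \<le> D \<Longrightarrow> k \<in> I \<Longrightarrow> y \<in> Obj \<Longrightarrow> 0 \<le> pp d k y"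
proof (induction d arbitrary: k y)
  case 0 thus ?case using pp0 by simp
next
  case (Suc d)
  hence dD: "d < D" by simp
  show ?case
  proof (cases "k \<in> Ia d")
    case True
    have a: "(if y \<in> Oti d k then lam (Suc d) k y * xo (Suc d) y else 0) \<le> pp d k y"
      using lamx_pp[OF dD True] Oti_sub[of d k] Suc by auto
    have b: "0 \<le> (if y \<in> Ob d then gam (Suc d) k y * xi (Suc d) k else 0)"
      using gam_nn[OF dD True] xi_nn[OF dD True] by simp
    show ?thesis using pp_upd[OF dD True Suc.prems(3)] a b by linarith
  next
    case False thus ?thesis using inact[OF dD Suc.prems(2) False Suc.prems(3)] Suc by simp
  qed
qed

lemma pp_grow: "d < D \<Longrightarrow> k \<in> I \<Longrightarrow> y \<in> Obj \<Longrightarrow> pp (Suc d) k y > pp d k y \<Longrightarrow>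
   k \<in> Ia d \<and> y \<in> Ob d \<and> gam (Suc d) k y > 0"
proof -
  assume dD: "d < D" and k: "k \<in> I" and y: "y \<in> Obj" and gr: "pp (Suc d) k y > pp d k y"
  have ka: "k \<in> Ia d" using inact[OF dD k _ y] gr by force
  have a: "0 \<le> (if y \<in> Oti d k then lam (Suc d) k y * xo (Suc d) y else 0)"
    using lamx_nn[OF dD ka] Oti_sub[of d k] Ot_sub_Ob[of d] by auto
  have yb: "y \<in> Ob d" using pp_upd[OF dD ka y] a gr by (cases "y \<in> Ob d") auto
  have "gam (Suc d) k y * xi (Suc d) k > 0" using pp_upd[OF dD ka y] a gr yb by simp
  hence "gam (Suc d) k y \<noteq> 0" by auto
  thus ?thesis using gam_nn[OF dD ka yb] ka yb by simp
qed

definition Hd where "Hd d \<longleftrightarrow> (\<forall>k\<in>I. \<forall>w\<in>Obj. pp d k w > 0 \<longrightarrow> (\<forall>z\<in>Ob d. R k w z))"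

lemma closure:
  assumes H: "Hd d" and k: "k \<in> I" and w: "w \<in> Obj" and pw: "pp d k w > 0" and z: "z \<in> Ob d"
    and ind: "indiff R k z w"
  shows "w \<in> Ob d"
proof -
  let ?T = "labT I Obj R (Oc d) (pp d)" and ?TA = "labTA I Obj R (Oc d) (pp d)"
    and ?L = "labL I Obj R (Oc d) (pp d)" and ?LA = "labLA I Obj R (Oc d) (pp d)"
  obtain m where zm: "z \<in> ?T m"
    using z unfolding Obar_def Otil_def by (metis UN_E Un_iff lab_0(1))
  show ?thesis
  proof (cases "w \<in> ?TA m")
    case True thus ?thesis using labTA_sub_Obar by (meson subsetD)
  next
    case notTA: False
    show ?thesis
    proof (cases "k \<in> ?LA m")
      case False
      have wl: "w \<in> lab_Oi Obj R (pp d) (?T m) (?TA m) k"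
        unfolding lab_Oi_def using w notTA pw zm ind by auto
      hence "k \<in> ?L (Suc m)" unfolding labL_Suc using k False by auto
      hence "w \<in> ?T (Suc m)" unfolding labT_Suc using wl by auto
      thus ?thesis using labT_sub_Obar by (meson subsetD)
    next
      case True
      then obtain m' where km: "k \<in> ?L (Suc m')" unfolding labLA_eq by auto
      hence "lab_Oi Obj R (pp d) (?T m') (?TA m') k \<noteq> {}" unfolding labL_Suc by auto
      then obtain w1 z1 where w1: "w1 \<in> Obj" "pp d k w1 > 0" and z1: "z1 \<in> ?T m'" and i1: "indiff R k z1 w1"
        unfolding lab_Oi_def by auto
      have z1b: "z1 \<in> Ob d" using z1 labT_sub_Obar by (meson subsetD)
      have objs: "z1 \<in> Obj" "z \<in> Obj" using z1b z Ob_sub by auto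
      have r1: "R k w z1" using H k w pw z1b unfolding Hd_def by auto
      have "R k w1 z" using H k w1 z unfolding Hd_def by auto
      moreover have "R k z1 w1" "R k z w" using i1 ind unfolding indiff_def by auto
      ultimately have "R k z1 w" using Rtrans[OF k] objs w w1(1) by metis
      hence i2: "indiff R k z1 w" using r1 unfolding indiff_def by simp
      show ?thesis
      proof (cases "w \<in> ?TA m'")
        case True thus ?thesis using labTA_sub_Obar by (meson subsetD)
      next
        case False
        have "w \<in> lab_Oi Obj R (pp d) (?T m') (?TA m') k"
          unfolding lab_Oi_def using w False pw z1 i2 by auto
        hence "w \<in> ?T (Suc m')" unfolding labT_Suc using km by auto
        thus ?thesis using labT_sub_Obar by (meson subsetD)
      qed
    qed
  qed
qed

lemma Ob_mono: assumes dD: "d < D" and H: "Hd d" shows "Ob (Suc d) \<subseteq> Ob d"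
proof (rule Obar_min)
  show "Oc (Suc d) \<subseteq> Ob d" using Oc_mono Oc_sub_Ob by (meson subset_trans)
next
  fix k w z assume k: "k \<in> I" and w: "w \<in> Obj" and p: "0 < pp (Suc d) k w" and z: "z \<in> Ob d"
    and ind: "indiff R k z w"
  show "w \<in> Ob d"
  proof (cases "pp d k w > 0")
    case True show ?thesis using closure[OF H k w True z ind] by simp
  next
    case False thus ?thesis using pp_grow[OF dD k w] p by simp
  qed
qed

lemma H_all: "d \<le> D \<Longrightarrow> Hd d"
proof (induction d)
  case 0 thus ?case using pp0 unfolding Hd_def by simp
next
  case (Suc d)
  hence dD: "d < D" and H: "Hd d" by auto
  show ?case unfolding Hd_def
  proof (intro ballI impI)
    fix k w z assume k: "k \<in> I" and w: "w \<in> Obj" and p: "0 < pp (Suc d) k w" and z: "z \<in> Ob (Suc d)"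
    have zd: "z \<in> Ob d" using Ob_mono[OF dD H] z by auto
    show "R k w z"
    proof (cases "pp d k w > 0")
      case True thus ?thesis using H k w zd unfolding Hd_def by auto
    next
      case False
      hence g: "k \<in> Ia d \<and> w \<in> Ob d \<and> gam (Suc d) k w > 0" using pp_grow[OF dD k w] p by simp
      hence "w \<in> Aset I Obj R (Oc d) (pp d) k" using gam_A[OF dD] by auto
      hence "w \<in> Bset I Obj R (Oc d) (pp d) k" unfolding Aset_def by auto
      thus ?thesis using zd unfolding Bset_def by auto
    qed
  qed
qed

lemma Ob_mono': "d < D \<Longrightarrow> Ob (Suc d) \<subseteq> Ob d"
  using Ob_mono H_all by simp

end



context frun begin

lemma sales: "d < D \<Longrightarrow> k \<in> Ia d \<Longrightarrow>
  (\<Sum>y\<in>Obj. om d k y - om (Suc d) k y) = (\<Sum>y\<in>Oc d. lam (Suc d) k y * xo (Suc d) y)"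
proof -
  assume dD: "d < D" and k: "k \<in> Ia d"
  have kI: "k \<in> I" using k Ia_sub by auto
  have "(\<Sum>y\<in>Obj. om d k y - om (Suc d) k y) = (\<Sum>y\<in>Oc d. om d k y - om (Suc d) k y)"
  proof (rule sum.mono_neutral_right[OF finObj Oc_sub], intro ballI)
    fix y assume "y \<in> Obj - Oc d"
    thus "om d k y - om (Suc d) k y = 0" using om_zero[of d k y] om_upd[OF dD k, of y] dD kI by simp
  qed
  also have "\<dots> = (\<Sum>y\<in>Oc d. lam (Suc d) k y * xo (Suc d) y)"
    by (rule sum.cong) (use om_upd[OF dD k] Oc_sub[of d] in auto)
  finally show ?thesis .
qed

lemma sales_nn: "d < D \<Longrightarrow> k \<in> Ia d \<Longrightarrow> 0 \<le> (\<Sum>y\<in>Oc d. lam (Suc d) k y * xo (Suc d) y)"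
proof -
  assume dD: "d < D" and k: "k \<in> Ia d"
  show ?thesis by (rule sum_nonneg) (use lamx_nn[OF dD k] Oc_sub_Ob[of d] in auto)
qed

lemma pp_delta: "d < D \<Longrightarrow> k \<in> Ia d \<Longrightarrow> V \<subseteq> Obj \<Longrightarrow>
  (\<Sum>y\<in>V. pp (Suc d) k y) = (\<Sum>y\<in>V. pp d k y) - (\<Sum>y\<in>V \<inter> Oti d k. lam (Suc d) k y * xo (Suc d) y)
     + xi (Suc d) k * (\<Sum>y\<in>V \<inter> Ob d. gam (Suc d) k y)"
proof -
  assume dD: "d < D" and k: "k \<in> Ia d" and V: "V \<subseteq> Obj"
  have fV: "finite V" using V finite_subset finObj by auto
  have "(\<Sum>y\<in>V. pp (Suc d) k y) = (\<Sum>y\<in>V. pp d k y - (if y \<in> Oti d k then lam (Suc d) k y * xo (Suc d) y else 0)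
                    + (if y \<in> Ob d then gam (Suc d) k y * xi (Suc d) k else 0))"
    by (rule sum.cong) (use pp_upd[OF dD k] V in auto)
  also have "\<dots> = (\<Sum>y\<in>V. pp d k y) - (\<Sum>y\<in>V. (if y \<in> Oti d k then lam (Suc d) k y * xo (Suc d) y else 0))
                    + (\<Sum>y\<in>V. (if y \<in> Ob d then gam (Suc d) k y * xi (Suc d) k else 0))"
    by (simp add: sum.distrib sum_subtractf)
  also have "(\<Sum>y\<in>V. (if y \<in> Oti d k then lam (Suc d) k y * xo (Suc d) y else 0)) = (\<Sum>y\<in>V \<inter> Oti d k. lam (Suc d) k y * xo (Suc d) y)"
    using sum.inter_restrict[OF fV] by metis
  also have "(\<Sum>y\<in>V. (if y \<in> Ob d then gam (Suc d) k y * xi (Suc d) k else 0)) = (\<Sum>y\<in>V \<inter> Ob d. gam (Suc d) k y * xi (Suc d) k)"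
    using sum.inter_restrict[OF fV] by metis
  also have "\<dots> = xi (Suc d) k * (\<Sum>y\<in>V \<inter> Ob d. gam (Suc d) k y)"
    by (simp add: sum_distrib_left mult.commute)
  finally show ?thesis .
qed

definition E where "E k d = (\<Sum>y\<in>Obj. \<omega> k y - om d k y)"

lemma mass: "d \<le> D \<Longrightarrow> k \<in> I \<Longrightarrow> (\<Sum>y\<in>Obj. pp d k y) = E k d"
proof (induction d)
  case 0 thus ?case using pp0 om0 unfolding E_def by simp
next
  case (Suc d)
  hence dD: "d < D" by simp
  have Esuc: "E k (Suc d) = E k d + (\<Sum>y\<in>Obj. om d k y - om (Suc d) k y)"
    unfolding E_def by (simp add: sum.distrib[symmetric] sum_subtractf[symmetric])
  show ?case
  proof (cases "k \<in> Ia d")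
    case True
    have "(\<Sum>y\<in>Obj. pp (Suc d) k y) = (\<Sum>y\<in>Obj. pp d k y) - (\<Sum>y\<in>Oti d k. lam (Suc d) k y * xo (Suc d) y)
     + xi (Suc d) k"
      using pp_delta[OF dD True order_refl] Otil_sub[of I Obj R "Oc d" "pp d"] Oti_sub[of d k] Ob_sub[of d]
        gam_sum[OF dD True] by (simp add: Int_absorb1 inf.absorb2 subset_trans)
    also have "\<dots> = (\<Sum>y\<in>Obj. pp d k y) + (\<Sum>y\<in>Oc d. lam (Suc d) k y * xo (Suc d) y)"
      using xi_split[OF dD True] by simp
    finally show ?thesis using Esuc sales[OF dD True] Suc by simp
  next
    case False
    have h: "\<And>y. y \<in> Obj \<Longrightarrow> om (Suc d) k y = om d k y \<and> pp (Suc d) k y = pp d k y"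
      using inact[OF dD Suc.prems(2) False] by blast
    have "(\<Sum>y\<in>Obj. pp (Suc d) k y) = (\<Sum>y\<in>Obj. pp d k y)" by (rule sum.cong) (use h in auto)
    moreover have "(\<Sum>y\<in>Obj. om d k y - om (Suc d) k y) = 0" by (rule sum.neutral) (use h in auto)
    ultimately show ?thesis using Esuc Suc by simp
  qed
qed

lemma ba_d: "d < D \<Longrightarrow> k \<in> Ia d \<Longrightarrow> l \<in> Ia d \<Longrightarrow> y \<in> Oc d \<Longrightarrow> om d l y \<le> om d k y \<Longrightarrow>
   lam (Suc d) l y \<le> lam (Suc d) k y \<and> om (Suc d) l y \<le> om (Suc d) k y"
  using ba unfolding bounded_advantage_def Let_def by simp

lemma order: "d \<le> D \<Longrightarrow> k \<in> I \<Longrightarrow> l \<in> I \<Longrightarrow> y \<in> Obj \<Longrightarrow> \<omega> l y \<le> \<omega> k y \<Longrightarrow>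
   om d l y \<le> om d k y \<and> \<omega> l y - om d l y \<le> \<omega> k y - om d k y"
proof (induction d)
  case 0 thus ?case using om0 by simp
next
  case (Suc d)
  hence dD: "d < D" and IH: "om d l y \<le> om d k y \<and> \<omega> l y - om d l y \<le> \<omega> k y - om d k y" by auto
  have kI: "k \<in> I" and lI: "l \<in> I" and y: "y \<in> Obj" using Suc by auto
  have nnk: "0 \<le> om (Suc d) k y" and nnl: "0 \<le> om (Suc d) l y" using om_nn Suc by auto
  have lek: "om (Suc d) k y \<le> om d k y" and lel: "om (Suc d) l y \<le> om d l y" using om_le[OF dD] kI lI y by auto
  show ?case
  proof (cases "k \<in> Ia d")
    case False
    have "om d k y = 0" using inact_zero[OF _ kI False y] dD by simp
    moreover have "om (Suc d) k y = om d k y" using inact[OF dD kI False y] by simp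
    ultimately show ?thesis using IH nnl lel om_nn[of d l y] dD lI y by simp
  next
    case kA: True
    show ?thesis
    proof (cases "l \<in> Ia d")
      case False
      have "om d l y = 0" using inact_zero[OF _ lI False y] dD by simp
      moreover have "om (Suc d) l y = om d l y" using inact[OF dD lI False y] by simp
      ultimately show ?thesis using IH nnk lek by simp
    next
      case lA: True
      show ?thesis
      proof (cases "y \<in> Oc d")
        case True
        have b: "lam (Suc d) l y \<le> lam (Suc d) k y \<and> om (Suc d) l y \<le> om (Suc d) k y"
          using ba_d[OF dD kA lA True] IH by simp
        have x: "0 \<le> xo (Suc d) y" using xo_nn[OF dD] Oc_sub_Ob True by auto
        have "lam (Suc d) l y * xo (Suc d) y \<le> lam (Suc d) k y * xo (Suc d) y"
          using b x by (simp add: mult_right_mono)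
        thus ?thesis using om_upd[OF dD kA y] om_upd[OF dD lA y] True IH b by simp
      next
        case False
        thus ?thesis using om_upd[OF dD kA y] om_upd[OF dD lA y] om_zero[of d k y] om_zero[of d l y] dD kI lI y IH
          by simp
      qed
    qed
  qed
qed

end



context frun begin

context
  fixes i j ob assumes iI: "i \<in> I" and jI: "j \<in> I" and obO: "ob \<in> Obj"
begin

definition "U = {y\<in>Obj. R i y ob}"
definition "P k d = (\<Sum>y\<in>U. pp d k y)"
definition "S d \<longleftrightarrow> U \<inter> Ob d \<noteq> {}"

lemma U_sub: "U \<subseteq> Obj" unfolding U_def by auto

lemma step_i_S: assumes dD: "d < D" and S: "S d"
  shows "P i d + (\<Sum>y\<in>Obj. om d i y - om (Suc d) i y) \<le> P i (Suc d)"
proof (cases "i \<in> Ia d")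
  case False
  have h: "\<And>y. y \<in> Obj \<Longrightarrow> om (Suc d) i y = om d i y \<and> pp (Suc d) i y = pp d i y"
    using inact[OF dD iI False] by blast
  have "(\<Sum>y\<in>U. pp (Suc d) i y) = (\<Sum>y\<in>U. pp d i y)" by (rule sum.cong) (use h U_sub in auto)
  moreover have "(\<Sum>y\<in>Obj. om d i y - om (Suc d) i y) = 0" by (rule sum.neutral) (use h in auto)
  ultimately show ?thesis unfolding P_def by simp
next
  case True
  obtain u where u: "u \<in> U" "u \<in> Ob d" using S unfolding S_def by auto
  have gU: "y \<in> U" if y: "y \<in> Ob d" "gam (Suc d) i y > 0" for y
  proof -
    have "y \<in> Bset I Obj R (Oc d) (pp d) i" using gam_A[OF dD True y] unfolding Aset_def by auto
    hence r: "R i y u" using u(2) unfolding Bset_def by auto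
    have "y \<in> Obj" "u \<in> Obj" using y(1) u(2) Ob_sub[of d] by auto
    moreover have "R i u ob" using u(1) unfolding U_def by auto
    ultimately have "R i y ob" using Rtrans[OF iI _ _ obO r] by auto
    thus ?thesis unfolding U_def using \<open>y \<in> Obj\<close> by auto
  qed
  have g1: "(\<Sum>y\<in>U \<inter> Ob d. gam (Suc d) i y) = 1"
  proof -
    have "(\<Sum>y\<in>Ob d. gam (Suc d) i y) = (\<Sum>y\<in>U \<inter> Ob d. gam (Suc d) i y)"
    proof (rule sum.mono_neutral_right[OF finOb], simp, intro ballI)
      fix y assume "y \<in> Ob d - U \<inter> Ob d"
      thus "gam (Suc d) i y = 0" using gU gam_nn[OF dD True, of y] by force
    qed
    thus ?thesis using gam_sum[OF dD True] by simp
  qed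
  have l1: "(\<Sum>y\<in>U \<inter> Oti d i. lam (Suc d) i y * xo (Suc d) y) \<le> (\<Sum>y\<in>Oti d i. lam (Suc d) i y * xo (Suc d) y)"
    by (rule sum_mono2[OF finOti]) (use lamx_nn[OF dD True] Oti_sub[of d i] Ot_sub_Ob[of d] in auto)
  have "P i (Suc d) = P i d - (\<Sum>y\<in>U \<inter> Oti d i. lam (Suc d) i y * xo (Suc d) y) + xi (Suc d) i"
    unfolding P_def using pp_delta[OF dD True U_sub] g1 by simp
  thus ?thesis using l1 xi_split[OF dD True] sales[OF dD True] by simp
qed

lemma step_i: assumes dD: "d < D" shows "P i d \<le> P i (Suc d)"
proof (cases "S d")
  case True
  have "0 \<le> (\<Sum>y\<in>Obj. om d i y - om (Suc d) i y)"
    by (rule sum_nonneg) (use om_le[OF dD iI] in auto)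
  thus ?thesis using step_i_S[OF dD True] by simp
next
  case F: False
  show ?thesis
  proof (cases "i \<in> Ia d")
    case False
    have h: "\<And>y. y \<in> Obj \<Longrightarrow> pp (Suc d) i y = pp d i y"
      using inact[OF dD iI False] by blast
    have "(\<Sum>y\<in>U. pp (Suc d) i y) = (\<Sum>y\<in>U. pp d i y)" by (rule sum.cong) (use h U_sub in auto)
    thus ?thesis unfolding P_def by simp
  next
    case True
    have e: "U \<inter> Oti d i = {}" using F Oti_sub[of d i] Ot_sub_Ob[of d] unfolding S_def by auto
    have "0 \<le> xi (Suc d) i * (\<Sum>y\<in>U \<inter> Ob d. gam (Suc d) i y)"
    proof (rule mult_nonneg_nonneg)
      show "0 \<le> xi (Suc d) i" using xi_nn[OF dD True] .
      show "0 \<le> (\<Sum>y\<in>U \<inter> Ob d. gam (Suc d) i y)" by (rule sum_nonneg) (use gam_nn[OF dD True] in auto)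
    qed
    thus ?thesis unfolding P_def using pp_delta[OF dD True U_sub] e by simp
  qed
qed

lemma step_j: assumes dD: "d < D" and nS: "\<not> S d" shows "P j (Suc d) = P j d"
proof (cases "j \<in> Ia d")
  case False
  have h: "\<And>y. y \<in> Obj \<Longrightarrow> pp (Suc d) j y = pp d j y"
    using inact[OF dD jI False] by blast
  have "(\<Sum>y\<in>U. pp (Suc d) j y) = (\<Sum>y\<in>U. pp d j y)" by (rule sum.cong) (use h U_sub in auto)
  thus ?thesis unfolding P_def by simp
next
  case True
  have e: "U \<inter> Oti d j = {}" "U \<inter> Ob d = {}" using nS Oti_sub[of d j] Ot_sub_Ob[of d] unfolding S_def by auto
  thus ?thesis unfolding P_def using pp_delta[OF dD True U_sub] by simp
qed

lemma S_mono: "d < D \<Longrightarrow> S (Suc d) \<Longrightarrow> S d"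
  using Ob_mono'[of d] unfolding S_def by auto

lemma final: "P j D - P i D \<le> (\<Sum>y\<in>{y\<in>Obj. \<omega> j y > \<omega> i y}. \<omega> j y - \<omega> i y)"
proof -
  define Q where "Q t \<longleftrightarrow> t \<le> D \<and> (\<forall>d. t \<le> d \<and> d < D \<longrightarrow> \<not> S d)" for t
  define t where "t = (LEAST t. Q t)"
  have QD: "Q D" unfolding Q_def by auto
  hence Qt: "Q t" unfolding t_def by (rule LeastI)
  hence tD: "t \<le> D" unfolding Q_def by auto
  have Sbefore: "S d" if "d < t" for d
  proof (rule ccontr)
    assume nS: "\<not> S d"
    have "\<not> S (d + n)" if "d + n < D" for n
      using that
    proof (induction n)
      case 0 thus ?case using nS by simp
    next
      case (Suc n)
      thus ?case using S_mono[of "d + n"] by auto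
    qed
    hence "\<forall>d'. d \<le> d' \<and> d' < D \<longrightarrow> \<not> S d'" by (metis le_add_diff_inverse)
    hence "Q d" unfolding Q_def using \<open>d < t\<close> tD by auto
    hence "t \<le> d" unfolding t_def by (rule Least_le)
    thus False using \<open>d < t\<close> by simp
  qed
  have Pj: "P j (t + n) = P j t" if "t + n \<le> D" for n
    using that
  proof (induction n)
    case 0 thus ?case by simp
  next
    case (Suc n)
    have "\<not> S (t + n)" using Qt Suc.prems unfolding Q_def by auto
    thus ?case using step_j[of "t + n"] Suc by auto
  qed
  hence PjD: "P j D = P j t" using tD by (metis le_add_diff_inverse order_refl)
  have Pi: "P i (t + n) \<ge> P i t" if "t + n \<le> D" for n
    using that
  proof (induction n)
    case 0 thus ?case by simp
  next
    case (Suc n)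
    thus ?case using step_i[of "t + n"] by auto
  qed
  hence PiD: "P i D \<ge> P i t" using tD by (metis le_add_diff_inverse order_refl)
  have PiE: "E i d \<le> P i d" if "d \<le> t" for d
    using that
  proof (induction d)
    case 0
    have "E i 0 = 0" unfolding E_def by (rule sum.neutral) (use om0 iI in auto)
    moreover have "P i 0 = 0" unfolding P_def by (rule sum.neutral) (use pp0 iI U_sub in auto)
    ultimately show ?case by simp
  next
    case (Suc d)
    have dD: "d < D" using Suc tD by simp
    have "E i (Suc d) = E i d + (\<Sum>y\<in>Obj. om d i y - om (Suc d) i y)"
      unfolding E_def by (simp add: sum.distrib[symmetric] sum_subtractf[symmetric])
    thus ?case using step_i_S[OF dD Sbefore] Suc by simp
  qed
  have PjE: "P j t \<le> E j t"
  proof -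
    have "P j t \<le> (\<Sum>y\<in>Obj. pp t j y)" unfolding P_def
      by (rule sum_mono2[OF finObj U_sub]) (use pp_nn[OF tD jI] in auto)
    thus ?thesis using mass[OF tD jI] by simp
  qed
  let ?Sp = "{y\<in>Obj. \<omega> j y > \<omega> i y}"
  let ?g = "\<lambda>y. (\<omega> j y - om t j y) - (\<omega> i y - om t i y)"
  have "E j t - E i t = (\<Sum>y\<in>Obj. ?g y)" unfolding E_def by (simp add: sum_subtractf)
  also have "\<dots> = (\<Sum>y\<in>?Sp. ?g y) + (\<Sum>y\<in>Obj - ?Sp. ?g y)"
  proof -
    have "?Sp \<subseteq> Obj" by auto
    from sum.subset_diff[OF this finObj, of ?g] show ?thesis by (simp add: add.commute)
  qed
  also have "\<dots> \<le> (\<Sum>y\<in>?Sp. \<omega> j y - \<omega> i y) + 0"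
  proof (rule add_mono)
    show "(\<Sum>y\<in>?Sp. ?g y) \<le> (\<Sum>y\<in>?Sp. \<omega> j y - \<omega> i y)"
    proof (rule sum_mono)
      fix y assume y: "y \<in> ?Sp"
      thus "?g y \<le> \<omega> j y - \<omega> i y" using order[OF tD jI iI, of y] by auto
    qed
    show "(\<Sum>y\<in>Obj - ?Sp. ?g y) \<le> 0"
    proof (rule sum_nonpos)
      fix y assume y: "y \<in> Obj - ?Sp"
      thus "?g y \<le> 0" using order[OF tD iI jI, of y] by auto
    qed
  qed
  finally have "E j t - E i t \<le> (\<Sum>y\<in>?Sp. \<omega> j y - \<omega> i y)" by simp
  thus ?thesis using PjD PiD PiE[of t] PjE by simp
qed

end

lemma main: "\<forall>i\<in>I. \<forall>j\<in>I. \<forall>ob\<in>Obj.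
           (\<Sum>ob'\<in>{ob'\<in>Obj. R i ob' ob}. pp D j ob') - (\<Sum>ob'\<in>{ob'\<in>Obj. R i ob' ob}. pp D i ob')
             \<le> (\<Sum>ob''\<in>{ob''\<in>Obj. \<omega> j ob'' > \<omega> i ob''}. \<omega> j ob'' - \<omega> i ob'')"
proof (intro ballI)
  fix i j ob assume a: "i \<in> I" "j \<in> I" "ob \<in> Obj"
  show "(\<Sum>ob'\<in>{ob'\<in>Obj. R i ob' ob}. pp D j ob') - (\<Sum>ob'\<in>{ob'\<in>Obj. R i ob' ob}. pp D i ob')
             \<le> (\<Sum>ob''\<in>{ob''\<in>Obj. \<omega> j ob'' > \<omega> i ob''}. \<omega> j ob'' - \<omega> i ob'')"
    using final[OF a] unfolding P_def[OF a] U_def[OF a] .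
qed

end

theorem proposition2:
  fixes I :: "'i set" and Obj :: "'o set" and R :: "'i \<Rightarrow> 'o \<Rightarrow> 'o \<Rightarrow> bool"
    and \<omega> :: "'i \<Rightarrow> 'o \<Rightarrow> real"
    and om pp lam beta gam :: "nat \<Rightarrow> 'i \<Rightarrow> 'o \<Rightarrow> real"
    and xi :: "nat \<Rightarrow> 'i \<Rightarrow> real" and xo :: "nat \<Rightarrow> 'o \<Rightarrow> real" and D :: nat
  assumes "FEE_problem I Obj R \<omega>"
    and "fttc_run I Obj R \<omega> om pp lam beta gam xi xo D"
    and "bounded_advantage I Obj R om pp lam D"
  shows "\<forall>i\<in>I. \<forall>j\<in>I. \<forall>ob\<in>Obj.
           (\<Sum>ob'\<in>{ob'\<in>Obj. R i ob' ob}. pp D j ob') - (\<Sum>ob'\<in>{ob'\<in>Obj. R i ob' ob}. pp D i ob')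
             \<le> (\<Sum>ob''\<in>{ob''\<in>Obj. \<omega> j ob'' > \<omega> i ob''}. \<omega> j ob'' - \<omega> i ob'')"
proof -
  interpret frun I Obj R \<omega> om pp lam beta gam xi xo D using assms by unfold_locales
  show ?thesis by (rule main)
qed

end
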